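(* Fix a positive integer $k$. Then the sequence $(\Gamma(n^k,(n+1)^k))_{n\ge 1}$ is eventually $1,2,1,2,\ldots$ (alternating between $1$ and $2$). More precisely, let $g(x)$ be the remainder of the polynomial $\left(\sum_{i=1}^k x^{i-1}\right)^k$ upon division by $x^k$ (i.e., the sum of its terms of degree less than $k$). When $k$ is odd, let $M_k$ be the smallest positive integer such that $0<n^k-g(n)<n^k$ and $0<g(-n)<n^k$ for all integers $n\ge M_k$; when $k$ is even, let $M_k$ be the smallest positive integer such that $0<n^k+g(-n)<n^k$ and $0<g(n)<n^k$ for all integers $n\ge M_k$. Then the sequence $(\Gamma(n^k,(n+1)^k))_{n\ge 1}$ alternates between $1$ and $2$ from some index $n\le M_k+1$ onward.
   Context: For relatively prime positive integers $p,q$, exactly one of the equations $px+qy=\frac{(p-1)(q-1)}{2}$ (Equation 1) and $px+qy+1=\frac{(p-1)(q-1)}{2}$ (Equation 2) has a solution in nonnegative integers $(x,y)$. For positive integers $a,b$ with $d=\gcd(a,b)$, $\Gamma(a,b)=1$ if Equation 1 with $(p,q)=(a/d,b/d)$ has a nonnegative integer solution, and $\Gamma(a,b)=2$ otherwise. *)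

theory Defs
  imports Main "HOL-Computational_Algebra.Polynomial"
begin

definition Gamma :: "nat \<Rightarrow> nat \<Rightarrow> nat" where
  "Gamma a b = (let d = gcd a b; p = a div d; q = b div d in
     if (\<exists>x y :: nat. p * x + q * y = (p - 1) * (q - 1) div 2) then 1 else 2)"

definition gpoly :: "nat \<Rightarrow> int poly" where
  "gpoly k = (\<Sum>i<k. monom 1 i) ^ k"

definition g :: "nat \<Rightarrow> int \<Rightarrow> int" where
  "g k x = (\<Sum>i<k. coeff (gpoly k) i * x ^ i)"

definition Mcond :: "nat \<Rightarrow> nat \<Rightarrow> bool" where
  "Mcond k M = (0 < M \<and> (\<forall>n::int. n \<ge> int M \<longrightarrow>
     (if odd k then 0 < n ^ k - g k n \<and> n ^ k - g k n < n ^ k \<and> 0 < g k (-n) \<and> g k (-n) < n ^ k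
      else 0 < n ^ k + g k (-n) \<and> n ^ k + g k (-n) < n ^ k \<and> 0 < g k n \<and> g k n < n ^ k)))"

definition Mk :: "nat \<Rightarrow> nat" where
  "Mk k = (LEAST M. Mcond k M)"

end

theory Submission
  imports Defs "HOL-Number_Theory.Cong"
begin

lemma rep_crit:
  fixes p q :: nat and a b :: int
  assumes p0: "p > 0" and q0: "q > 0" and a0: "0 < a" "a < int p" and b0: "0 < b" "b < int q"
    and E: "a * int q + b * int p = int p * int q + 1"
  shows "(\<exists>x y :: nat. p * x + q * y = (p - 1) * (q - 1) div 2) \<longleftrightarrow> odd a \<and> odd b"
proof -
  have par: "even ((p - 1) * (q - 1))"
  proof (rule ccontr)
    assume "odd ((p - 1) * (q - 1))"
    then have "even p" "even q" using p0 q0 by (auto simp: even_mult_iff)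
    then have "even (a * int q + b * int p)" by auto
    moreover have "odd (int p * int q + 1)" using \<open>even p\<close> by auto
    ultimately show False using E by simp
  qed
  define C where "C = (p - 1) * (q - 1) div 2"
  have C2: "2 * int C = (a - 1) * int q + (b - 1) * int p"
  proof -
    have "2 * C = (p - 1) * (q - 1)" using par unfolding C_def by simp
    then have "2 * int C = int ((p - 1) * (q - 1))" by linarith
    also have "\<dots> = (int p - 1) * (int q - 1)" using p0 q0 by (simp add: of_nat_diff)
    finally show ?thesis using E by (simp add: algebra_simps)
  qed
  have cop: "coprime (int p) (int q)"
  proof (rule coprimeI)
    fix d assume "d dvd int p" "d dvd int q"
    then have "d dvd a * int q + b * int p" by simp
    moreover have "d dvd int p * int q" using \<open>d dvd int p\<close> by simp
    ultimately have "d dvd (a * int q + b * int p) - int p * int q" by (rule dvd_diff)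
    then show "is_unit d" using E by simp
  qed
  show ?thesis unfolding C_def[symmetric]
  proof
    assume "\<exists>x y. p * x + q * y = C"
    then obtain x y where xy: "p * x + q * y = C" by blast
    then have xy': "int p * int x + int q * int y = int C" using arg_cong[OF xy, of int] by simp
    have h1: "int p * (2 * int x - b + 1) = int q * (a - 1 - 2 * int y)"
      using C2 xy' by (simp add: algebra_simps)
    have C2n: "2 * C = (p - 1) * (q - 1)" using par unfolding C_def by simp
    have "2 * (q * y) \<le> (p - 1) * q"
    proof -
      have "q * y \<le> C" using xy by linarith
      then have "2 * (q * y) \<le> 2 * C" by simp
      also have "\<dots> \<le> (p - 1) * q" unfolding C2n by simp
      finally show ?thesis .
    qed
    then have "q * (2 * y) \<le> q * (p - 1)" by (simp add: algebra_simps)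
    then have "2 * y \<le> p - 1" using q0 by simp
    then have yb: "2 * int y < int p" using p0 by linarith
    have "2 * (p * x) \<le> p * (q - 1)"
    proof -
      have "p * x \<le> C" using xy by linarith
      then have "2 * (p * x) \<le> 2 * C" by simp
      also have "\<dots> \<le> p * (q - 1)" unfolding C2n by simp
      finally show ?thesis .
    qed
    then have "p * (2 * x) \<le> p * (q - 1)" by (simp add: algebra_simps)
    then have "2 * x \<le> q - 1" using p0 by simp
    then have xb: "2 * int x < int q" using q0 by linarith
    have d1: "int p dvd (a - 1 - 2 * int y)"
    proof -
      have "int p dvd int q * (a - 1 - 2 * int y)" using h1 by (metis dvd_triv_left)
      then show ?thesis using cop by (simp add: coprime_dvd_mult_right_iff)
    qed
    have z1: "a - 1 - 2 * int y = 0"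
    proof (rule ccontr)
      assume "a - 1 - 2 * int y \<noteq> 0"
      from dvd_imp_le_int[OF this d1] yb a0 show False by simp
    qed
    have d2: "int q dvd (2 * int x - b + 1)"
    proof -
      have "int q dvd int p * (2 * int x - b + 1)" using h1 by (metis dvd_triv_left)
      then show ?thesis using cop by (simp add: coprime_dvd_mult_right_iff coprime_commute)
    qed
    have z2: "2 * int x - b + 1 = 0"
    proof (rule ccontr)
      assume "2 * int x - b + 1 \<noteq> 0"
      from dvd_imp_le_int[OF this d2] xb b0 show False by simp
    qed
    show "odd a \<and> odd b" using z1 z2 proof -
      have "a = 2 * int y + 1" "b = 2 * int x + 1" using z1 z2 by auto
      then show ?thesis by simp
    qed
  next
    assume "odd a \<and> odd b"
    then obtain y x where ay: "a = 2 * y + 1" and bx: "b = 2 * x + 1" by (meson oddE)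
    have "y \<ge> 0" "x \<ge> 0" using ay bx a0 b0 by auto
    have "int (p * nat x + q * nat y) = int C"
      using C2 ay bx \<open>y \<ge> 0\<close> \<open>x \<ge> 0\<close> by (simp add: algebra_simps)
    then show "\<exists>x y. p * x + q * y = C" by (metis of_nat_eq_iff)
  qed
qed

lemma inv_sum:
  fixes p q :: nat and a b :: int
  assumes p0: "p > 0" and q0: "q > 0" and a0: "0 < a" "a < int p" and b0: "0 < b" "b < int q"
    and cop: "coprime p q"
    and ca: "int p dvd a * int q - 1" and cb: "int q dvd b * int p - 1"
  shows "a * int q + b * int p = int p * int q + 1"
proof -
  have c1: "int p dvd a * int q + b * int p - 1"
  proof -
    have "int p dvd (a * int q - 1) + b * int p" using ca by simp
    then show ?thesis by (simp add: algebra_simps)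
  qed
  have c2: "int q dvd a * int q + b * int p - 1"
  proof -
    have "int q dvd (b * int p - 1) + a * int q" using cb by simp
    then show ?thesis by (simp add: algebra_simps)
  qed
  have "coprime (int p) (int q)" using cop by simp
  then have "int p * int q dvd a * int q + b * int p - 1" using c1 c2 divides_mult by blast
  then obtain t where t: "a * int q + b * int p - 1 = int p * int q * t" by (elim dvdE)
  have lo: "a * int q + b * int p - 1 > 0" using a0 b0 p0 q0
  proof -
    have "a * int q > 0" "b * int p > 0" using a0 b0 p0 q0 by simp_all
    then show ?thesis by simp
  qed
  have "a * int q \<le> (int p - 1) * int q" using a0 q0 by (intro mult_right_mono) auto
  moreover have "b * int p \<le> (int q - 1) * int p" using b0 p0 by (intro mult_right_mono) auto
  ultimately have hi: "a * int q + b * int p - 1 < 2 * (int p * int q)" by (simp add: algebra_simps)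
  have pq: "int p * int q > 0" using p0 q0 by simp
  have "t > 0"
  proof (rule ccontr)
    assume "\<not> t > 0"
    then have "int p * int q * t \<le> 0" using pq by (simp add: mult_nonneg_nonpos)
    then show False using lo t by simp
  qed
  moreover have "t < 2"
  proof (rule ccontr)
    assume "\<not> t < 2"
    then have "int p * int q * 2 \<le> int p * int q * t" using pq by (intro mult_left_mono) auto
    then show False using hi t by simp
  qed
  ultimately have "t = 1" by simp
  then show ?thesis using t by simp
qed

lemma poly_gpoly: "poly (gpoly k) x = (\<Sum>i<k. x ^ i) ^ k"
  unfolding gpoly_def by (simp add: poly_sum poly_monom)

lemma poly_trunc:
  fixes P :: "int poly"
  assumes "degree P < D"
  shows "poly P x = (\<Sum>i<D. coeff P i * x ^ i)"
proof -
  have "poly P x = (\<Sum>i\<le>degree P. coeff P i * x ^ i)" by (rule poly_altdef)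
  also have "\<dots> = (\<Sum>i<D. coeff P i * x ^ i)"
    by (rule sum.mono_neutral_left) (use assms in \<open>auto simp: coeff_eq_0\<close>)
  finally show ?thesis .
qed

lemma g_cong_poly: "[poly (gpoly k) x = g k x] (mod x ^ k)"
proof -
  define D where "D = degree (gpoly k) + k + 1"
  have kD: "k \<le> D" unfolding D_def by simp
  have "poly (gpoly k) x = (\<Sum>i<D. coeff (gpoly k) i * x ^ i)"
    by (rule poly_trunc) (simp add: D_def)
  also have "{..<D} = {..<k} \<union> {k..<D}" using kD by auto
  also have "(\<Sum>i\<in>{..<k} \<union> {k..<D}. coeff (gpoly k) i * x ^ i)
      = g k x + (\<Sum>i\<in>{k..<D}. coeff (gpoly k) i * x ^ i)"
    unfolding g_def by (subst sum.union_disjoint) auto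
  finally have e: "poly (gpoly k) x - g k x = (\<Sum>i\<in>{k..<D}. coeff (gpoly k) i * x ^ i)" by simp
  have "x ^ k dvd (\<Sum>i\<in>{k..<D}. coeff (gpoly k) i * x ^ i)"
  proof (rule dvd_sum)
    fix i assume "i \<in> {k..<D}"
    then have "x ^ k dvd x ^ i" by (simp add: le_imp_power_dvd)
    then show "x ^ k dvd coeff (gpoly k) i * x ^ i" by simp
  qed
  then show ?thesis using e by (simp add: cong_iff_dvd_diff)
qed

lemma key_cong: "[g k x * (1 - x) ^ k = 1] (mod x ^ k)"
proof -
  have "[g k x * (1 - x) ^ k = poly (gpoly k) x * (1 - x) ^ k] (mod x ^ k)"
    using g_cong_poly by (intro cong_mult cong_refl) (simp add: cong_sym)
  also have "poly (gpoly k) x * (1 - x) ^ k = (1 - x ^ k) ^ k"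
    by (simp add: poly_gpoly one_diff_power_eq power_mult_distrib[symmetric] mult.commute)
  also have "[(1 - x ^ k) ^ k = 1 ^ k] (mod x ^ k)"
    by (intro cong_pow) (simp add: cong_iff_dvd_diff)
  finally show ?thesis by simp
qed

lemma g_par: "[x = y] (mod 2) \<Longrightarrow> [g k x = g k y] (mod 2)"
  unfolding g_def by (intro cong_sum cong_mult cong_refl cong_pow)


lemma coeff_S: "coeff (\<Sum>i<k. monom (1::int) i) n = (if n < k then 1 else 0)"
  by (simp add: coeff_sum coeff_monom)

lemma nonneg_mult:
  fixes P Q :: "int poly"
  assumes "\<And>i. coeff P i \<ge> 0" "\<And>i. coeff Q i \<ge> 0"
  shows "coeff (P * Q) n \<ge> 0"
  unfolding coeff_mult using assms by (intro sum_nonneg mult_nonneg_nonneg) auto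

lemma nonneg_pow:
  fixes P :: "int poly"
  assumes "\<And>i. coeff P i \<ge> 0"
  shows "coeff (P ^ j) n \<ge> 0"
proof (induction j arbitrary: n)
  case 0 then show ?case by (simp add: coeff_1)
next
  case (Suc j) then show ?case using assms by (simp add: nonneg_mult)
qed

lemma gpoly_nonneg: "coeff (gpoly k) i \<ge> 0"
  unfolding gpoly_def by (rule nonneg_pow) (simp add: coeff_S)

lemma gpoly_top:
  assumes "k = Suc j"
  shows "coeff (gpoly k) j \<ge> 1"
proof -
  define S where "S = (\<Sum>i<k. monom (1::int) i)"
  have Sn: "\<And>i. coeff S i \<ge> 0" unfolding S_def by (simp add: coeff_S)
  have "gpoly k = S * S ^ j" unfolding gpoly_def S_def assms by simp
  then have "coeff (gpoly k) j = (\<Sum>i\<le>j. coeff S i * coeff (S ^ j) (j - i))"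
    by (simp add: coeff_mult)
  also have "\<dots> \<ge> coeff S j * coeff (S ^ j) (j - j)"
    by (rule member_le_sum) (auto intro!: mult_nonneg_nonneg Sn nonneg_pow)
  also have "coeff S j * coeff (S ^ j) (j - j) = 1"
    unfolding S_def by (simp add: coeff_S coeff_0_power assms)
  finally show ?thesis by simp
qed

lemma g_bounds:
  fixes n x :: int
  assumes k: "k = Suc j" and T: "(\<Sum>i<k. coeff (gpoly k) i) < n" and xn: "\<bar>x\<bar> = n"
  shows "\<bar>g k x\<bar> < n ^ k"
    and "\<bar>g k x - coeff (gpoly k) j * x ^ j\<bar> < n ^ j"
proof -
  let ?c = "coeff (gpoly k)"
  let ?T = "\<Sum>i<k. ?c i"
  have T0: "?T \<ge> 0" by (intro sum_nonneg gpoly_nonneg)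
  have n0: "n > 0" using T T0 by linarith
  have "\<bar>g k x\<bar> \<le> (\<Sum>i<k. \<bar>?c i * x ^ i\<bar>)" unfolding g_def by (rule sum_abs)
  also have "\<dots> = (\<Sum>i<k. ?c i * n ^ i)"
    using xn by (intro sum.cong) (auto simp: abs_mult power_abs gpoly_nonneg)
  also have "\<dots> \<le> (\<Sum>i<k. ?c i * n ^ j)"
    using n0 k by (intro sum_mono mult_left_mono power_increasing gpoly_nonneg) auto
  also have "\<dots> = ?T * n ^ j" by (simp add: sum_distrib_right)
  also have "\<dots> < n * n ^ j" using T n0 by (intro mult_strict_right_mono) auto
  finally show "\<bar>g k x\<bar> < n ^ k" using k by simp
  have gs: "g k x = (\<Sum>i<j. ?c i * x ^ i) + ?c j * x ^ j" unfolding g_def k by simp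
  have "n * \<bar>\<Sum>i<j. ?c i * x ^ i\<bar> \<le> n * (\<Sum>i<j. \<bar>?c i * x ^ i\<bar>)"
    using n0 by (intro mult_left_mono sum_abs) auto
  also have "\<dots> = (\<Sum>i<j. ?c i * n ^ Suc i)"
    using xn by (simp add: sum_distrib_left abs_mult power_abs gpoly_nonneg algebra_simps)
  also have "\<dots> \<le> (\<Sum>i<j. ?c i * n ^ j)"
    using n0 by (intro sum_mono mult_left_mono power_increasing gpoly_nonneg) auto
  also have "\<dots> \<le> (\<Sum>i<k. ?c i * n ^ j)"
    using n0 k by (intro sum_mono2) (auto intro!: mult_nonneg_nonneg gpoly_nonneg)
  also have "\<dots> = ?T * n ^ j" by (simp add: sum_distrib_right)
  also have "\<dots> < n * n ^ j" using T n0 by (intro mult_strict_right_mono) auto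
  finally have "\<bar>\<Sum>i<j. ?c i * x ^ i\<bar> < n ^ j" using n0 by simp
  then show "\<bar>g k x - ?c j * x ^ j\<bar> < n ^ j" using gs by simp
qed

lemma Mcond_exists:
  assumes "0 < k"
  shows "Mcond k (nat (\<Sum>i<k. coeff (gpoly k) i) + 1)"
proof -
  obtain j where k: "k = Suc j" using assms by (cases k) auto
  let ?c = "coeff (gpoly k)"
  let ?T = "\<Sum>i<k. ?c i"
  have T0: "?T \<ge> 0" by (intro sum_nonneg gpoly_nonneg)
  have cj: "?c j \<ge> 1" by (rule gpoly_top[OF k])
  show ?thesis unfolding Mcond_def
  proof (intro conjI allI impI)
    fix n :: int assume "int (nat ?T + 1) \<le> n"
    then have Tn: "?T < n" using T0 by simp
    then have n0: "n > 0" using T0 by simp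
    have A1: "\<bar>g k n\<bar> < n ^ k" and B1: "\<bar>g k n - ?c j * n ^ j\<bar> < n ^ j"
      using g_bounds[OF k Tn, of n] n0 by auto
    have A2: "\<bar>g k (-n)\<bar> < n ^ k" and B2: "\<bar>g k (-n) - ?c j * (-n) ^ j\<bar> < n ^ j"
      using g_bounds[OF k Tn, of "-n"] n0 by auto
    have nj: "?c j * n ^ j \<ge> n ^ j" using cj n0 by simp
    have gpos: "g k n > 0" using B1 nj by linarith
    show "if odd k then 0 < n ^ k - g k n \<and> n ^ k - g k n < n ^ k \<and> 0 < g k (- n) \<and> g k (- n) < n ^ k
       else 0 < n ^ k + g k (- n) \<and> n ^ k + g k (- n) < n ^ k \<and> 0 < g k n \<and> g k n < n ^ k"
    proof (cases "odd k")
      case True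
      then have "even j" using k by simp
      then have "(-n) ^ j = n ^ j" by simp
      then have "g k (-n) > 0" using B2 nj by simp
      then show ?thesis using True A1 A2 gpos by auto
    next
      case False
      then have "odd j" using k by simp
      then have "(-n) ^ j = - (n ^ j)" by simp
      then have "g k (-n) < 0" using B2 nj by simp
      then show ?thesis using False A1 A2 gpos by auto
    qed
  qed simp
qed
lemma cong2_odd: "[x = y] (mod (2::int)) \<Longrightarrow> odd x = odd y"
  by (simp add: cong_def odd_iff_mod_2_eq_one)

lemma dvd_neg_pow: "(n::int) ^ k dvd (- n) ^ k"
  unfolding power_minus[of n k] by (rule dvd_triv_right)

lemma Gamma_eval:
  fixes n :: nat
  assumes k0: "0 < k" and MC: "Mcond k M" and Mn: "M \<le> n"
  shows "Gamma (n ^ k) ((n + 1) ^ k) = (if (odd n \<longleftrightarrow> (odd k \<longleftrightarrow> odd (g k 1))) then 1 else 2)"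
proof -
  define p where "p = n ^ k"
  define q where "q = (n + 1) ^ k"
  define N where "N = int n"
  have M0: "0 < M" using MC unfolding Mcond_def by simp
  have n0: "n > 0" using M0 Mn by simp
  have C: "\<And>x::int. int M \<le> x \<Longrightarrow> (if odd k then 0 < x ^ k - g k x \<and> x ^ k - g k x < x ^ k \<and> 0 < g k (-x) \<and> g k (-x) < x ^ k
      else 0 < x ^ k + g k (-x) \<and> x ^ k + g k (-x) < x ^ k \<and> 0 < g k x \<and> g k x < x ^ k)"
    using MC unfolding Mcond_def by blast
  have C1: "if odd k then 0 < N ^ k - g k N \<and> N ^ k - g k N < N ^ k \<and> 0 < g k (-N) \<and> g k (-N) < N ^ k
      else 0 < N ^ k + g k (-N) \<and> N ^ k + g k (-N) < N ^ k \<and> 0 < g k N \<and> g k N < N ^ k"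
    by (rule C) (use Mn in \<open>simp add: N_def\<close>)
  have C2: "if odd k then 0 < (N+1) ^ k - g k (N+1) \<and> (N+1) ^ k - g k (N+1) < (N+1) ^ k \<and> 0 < g k (-(N+1)) \<and> g k (-(N+1)) < (N+1) ^ k
      else 0 < (N+1) ^ k + g k (-(N+1)) \<and> (N+1) ^ k + g k (-(N+1)) < (N+1) ^ k \<and> 0 < g k (N+1) \<and> g k (N+1) < (N+1) ^ k"
    by (rule C) (use Mn in \<open>simp add: N_def\<close>)
  have pN: "int p = N ^ k" and qN: "int q = (N + 1) ^ k" unfolding p_def q_def N_def by (simp_all add: add.commute)
  have cop: "coprime p q" unfolding p_def q_def by (simp add: coprime_power_left_iff coprime_power_right_iff)
  have gcd1: "gcd p q = 1" using cop by simp
  have p0: "p > 0" and q0: "q > 0" using n0 unfolding p_def q_def by simp_all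
  define a where "a = (if odd k then g k (-N) else N ^ k + g k (-N))"
  define b where "b = (if odd k then (N+1) ^ k - g k (N+1) else g k (N+1))"
  have a0: "0 < a" "a < int p" using C1 unfolding a_def pN by (auto split: if_splits)
  have b0: "0 < b" "b < int q" using C2 unfolding b_def qN by (auto split: if_splits)
  have ka: "N ^ k dvd g k (-N) * (N + 1) ^ k - 1"
  proof -
    have "[g k (-N) * (1 - (-N)) ^ k = 1] (mod (-N) ^ k)" by (rule key_cong)
    then have "(-N) ^ k dvd g k (-N) * (N + 1) ^ k - 1" by (simp add: cong_iff_dvd_diff add.commute)
    then show ?thesis using dvd_neg_pow dvd_trans by blast
  qed
  have ca: "int p dvd a * int q - 1"
  proof (cases "odd k")
    case True then show ?thesis using ka unfolding a_def pN qN by simp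
  next
    case False
    have eq: "a * int q - 1 = (g k (-N) * (N + 1) ^ k - 1) + N ^ k * (N + 1) ^ k"
      unfolding a_def qN using False by (simp add: algebra_simps)
    show ?thesis unfolding pN eq by (rule dvd_add[OF ka]) simp
  qed
  have kb: "(N + 1) ^ k dvd g k (N + 1) * (- N) ^ k - 1"
  proof -
    have "[g k (N + 1) * (1 - (N + 1)) ^ k = 1] (mod (N + 1) ^ k)" by (rule key_cong)
    then show ?thesis by (simp add: cong_iff_dvd_diff)
  qed
  have cb: "int q dvd b * int p - 1"
  proof (cases "odd k")
    case True
    then have "(- N) ^ k = - (N ^ k)" by simp
    then have eq: "b * int p - 1 = (g k (N + 1) * (- N) ^ k - 1) + (N + 1) ^ k * N ^ k"
      unfolding b_def pN using True by (simp add: algebra_simps)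
    show ?thesis unfolding qN eq by (rule dvd_add[OF kb]) simp
  next
    case False
    then have "(- N) ^ k = N ^ k" by simp
    then show ?thesis using kb False unfolding b_def pN qN by simp
  qed
  have E: "a * int q + b * int p = int p * int q + 1"
    by (rule inv_sum[OF p0 q0 a0 b0 cop ca cb])
  have G: "Gamma (n ^ k) ((n + 1) ^ k) = (if odd a \<and> odd b then 1 else 2)"
  proof -
    have R: "(\<exists>x y :: nat. p * x + q * y = (p - 1) * (q - 1) div 2) = (odd a \<and> odd b)"
      by (rule rep_crit[OF p0 q0 a0 b0 E])
    have "Gamma p q = (if odd a \<and> odd b then 1 else 2)"
      unfolding Gamma_def Let_def gcd1 div_by_1 R by simp
    then show ?thesis unfolding p_def q_def .
  qed
  have par: "(odd a \<and> odd b) = (odd n \<longleftrightarrow> (odd k \<longleftrightarrow> odd (g k 1)))"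
  proof (cases "odd n")
    case True
    then have "even q" unfolding q_def using k0 by simp
    then have "odd (a * int q + b * int p)" unfolding E by simp
    moreover have "even (a * int q)" using \<open>even q\<close> by simp
    ultimately have "odd (b * int p)" by simp
    then have bo: "odd b" by simp
    have "odd N" using True N_def by simp
    then have "even (- N - 1)" by simp
    then have "[- N = 1] (mod 2)" by (simp add: cong_iff_dvd_diff)
    then have ge: "odd (g k (-N)) = odd (g k 1)" by (intro cong2_odd g_par)
    have oN: "odd (N ^ k)" using \<open>odd N\<close> by simp
    have "odd a = (odd k \<longleftrightarrow> odd (g k 1))"
    proof (cases "odd k")
      case True then show ?thesis using ge unfolding a_def by simp
    next
      case False then show ?thesis using ge \<open>odd N\<close> k0 unfolding a_def by simp
    qed
    then show ?thesis using bo True by simp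
  next
    case False
    then have "even p" unfolding p_def using k0 by simp
    then have "odd (a * int q + b * int p)" unfolding E by simp
    moreover have "even (b * int p)" using \<open>even p\<close> by simp
    ultimately have "odd (a * int q)" by simp
    then have ao: "odd a" by simp
    have "odd (N + 1)" using False N_def by simp
    then have "even (N + 1 - 1)" by simp
    then have "[N + 1 = 1] (mod 2)" by (simp add: cong_iff_dvd_diff)
    then have ge: "odd (g k (N + 1)) = odd (g k 1)" by (intro cong2_odd g_par)
    have oN: "odd ((N + 1) ^ k)" using \<open>odd (N + 1)\<close> by simp
    have "odd b = (\<not> (odd k \<longleftrightarrow> odd (g k 1)))"
    proof (cases "odd k")
      case True then show ?thesis using ge \<open>odd (N + 1)\<close> k0 unfolding b_def by simp
    next
      case False then show ?thesis using ge unfolding b_def by simp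
    qed
    then show ?thesis using ao False by simp
  qed
  show ?thesis using G par by simp
qed

theorem theorem1p5:
  fixes k :: nat
  assumes "0 < k"
  shows "(\<exists>M. Mcond k M) \<and>
         (\<exists>N::nat. 1 \<le> N \<and> N \<le> Mk k + 1 \<and>
            (\<forall>n\<ge>N. {Gamma (n ^ k) ((n + 1) ^ k), Gamma ((n + 1) ^ k) ((n + 2) ^ k)} = {1, 2}))"
proof -
  have ex: "\<exists>M. Mcond k M" using Mcond_exists[OF assms] by blast
  have MC: "Mcond k (Mk k)" unfolding Mk_def using ex by (metis LeastI)
  have M1: "1 \<le> Mk k" using MC unfolding Mcond_def by simp
  have "\<forall>n\<ge>Mk k. {Gamma (n ^ k) ((n + 1) ^ k), Gamma ((n + 1) ^ k) ((n + 2) ^ k)} = {1, 2}"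
  proof (intro allI impI)
    fix n assume n: "Mk k \<le> n"
    let ?Q = "odd k \<longleftrightarrow> odd (g k 1)"
    have g1: "Gamma (n ^ k) ((n + 1) ^ k) = (if (odd n \<longleftrightarrow> ?Q) then 1 else 2)"
      by (rule Gamma_eval[OF assms MC n])
    have "Gamma ((n + 1) ^ k) ((n + 1 + 1) ^ k) = (if (odd (n + 1) \<longleftrightarrow> ?Q) then 1 else 2)"
      by (rule Gamma_eval[OF assms MC]) (use n in simp)
    then have g2: "Gamma ((n + 1) ^ k) ((n + 2) ^ k) = (if (odd (n + 1) \<longleftrightarrow> ?Q) then 1 else 2)"
      by (simp add: add.assoc)
    show "{Gamma (n ^ k) ((n + 1) ^ k), Gamma ((n + 1) ^ k) ((n + 2) ^ k)} = {1, 2}"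
      unfolding g1 g2 by auto
  qed
  then show ?thesis using ex M1 by auto
qed

end
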